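(* Let $p$ be an odd prime and $k$ a positive integer. Then $v_p(g_{k,U})=\sum_{\ell=1}^\infty\Big(\Big[\frac{k^2}{p^\ell}\Big]+(2k-p^\ell)\Big[\frac{k-1}{p^\ell}\Big]+\Big(\frac{p^\ell}{2}-2k\Big)\Big[\frac{2k-1}{p^\ell}\Big]-p^\ell\Big[\frac{k-1}{p^\ell}\Big]^2+\frac{p^\ell}{2}\Big[\frac{2k-1}{p^\ell}\Big]^2\Big)$ and $v_p(g_{k,O})=\sum_{\ell=1}^\infty\Big(\Big[\frac{\frac12k(k-1)}{p^\ell}\Big]-\big(k-\tfrac12\big)\Big[\frac{2k-3}{p^\ell}\Big]_2+\frac{p^\ell}{2}\Big[\frac{2k-3}{p^\ell}\Big]_2^2\Big)$.
   Context: $v_p(n)$ is the exponent of $p$ in the rational number $n$; $[x]$ is the floor of $x$; $[x]_2=\big[\tfrac12([x]+1)\big]$. Let $B_U(\lambda)=\lambda^2$, $B_O(\lambda)=\tfrac12\lambda(\lambda-1)$. Define $G_U(\lambda)=\lim_{N\to\infty}N^{-\lambda^2}\prod_{j=1}^{N}\frac{\Gamma(j)\Gamma(j+2\lambda)}{\Gamma(j+\lambda)^2}$, $G_O(\lambda)=\tfrac12\lim_{N\to\infty}N^{-\lambda(\lambda-1)/2}\,2^{2N\lambda}\prod_{j=1}^{N}\frac{\Gamma(N+j-1)\Gamma(j-\frac12+\lambda)}{\Gamma(N+j-1+\lambda)\Gamma(j-\frac12)}$, and $g_{\lambda,X}=\Gamma(1+B_X(\lambda))G_X(\lambda)$ for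 $X\in\{U,O\}$. *)

theory Defs
  imports "HOL-Analysis.Analysis" "HOL-Computational_Algebra.Primes"
begin

definition vp :: "nat \<Rightarrow> rat \<Rightarrow> int" where
  "vp p q = int (multiplicity (int p) (fst (quotient_of q)))
            - int (multiplicity (int p) (snd (quotient_of q)))"

definition B_U :: "real \<Rightarrow> real" where "B_U x = x^2"
definition B_O :: "real \<Rightarrow> real" where "B_O x = x * (x - 1) / 2"

definition G_U :: "real \<Rightarrow> real" where
  "G_U x = lim (\<lambda>N. real N powr (- (x^2)) *
      (\<Prod>j=1..N. Gamma (real j) * Gamma (real j + 2*x) / (Gamma (real j + x))^2))"

definition G_O :: "real \<Rightarrow> real" where
  "G_O x = 1/2 * lim (\<lambda>N. real N powr (- (x*(x-1)/2)) * 2 powr (2 * real N * x) *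
      (\<Prod>j=1..N. Gamma (real N + real j - 1) * Gamma (real j - 1/2 + x)
                 / (Gamma (real N + real j - 1 + x) * Gamma (real j - 1/2))))"

definition g_U :: "real \<Rightarrow> real" where "g_U x = Gamma (1 + B_U x) * G_U x"
definition g_O :: "real \<Rightarrow> real" where "g_O x = Gamma (1 + B_O x) * G_O x"

definition floor2 :: "real \<Rightarrow> int" where
  "floor2 x = \<lfloor>(real_of_int \<lfloor>x\<rfloor> + 1) / 2\<rfloor>"

end

theory Submission
  imports Defs
begin


lemma vp_div:
  fixes a b :: int
  assumes "prime p" "a \<noteq> 0" "b \<noteq> 0"
  shows "vp p (of_int a / of_int b) = int (multiplicity (int p) a) - int (multiplicity (int p) b)"
proof -
  obtain n d where nd: "quotient_of (of_int a / of_int b) = (n, d)" by (cases "quotient_of (of_int a / of_int b)")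
  have d: "d > 0" using quotient_of_denom_pos[OF nd] .
  have q: "(of_int a / of_int b :: rat) = of_int n / of_int d" using quotient_of_div[OF nd] .
  have "(of_int (a * d) :: rat) = of_int (n * b)" using q d assms
    by (simp add: field_simps)
  hence e: "a * d = n * b" by (simp only: of_int_eq_iff)
  have n0: "n \<noteq> 0" using e assms d by auto
  have pe: "prime_elem (int p)" using assms(1) by simp
  have "multiplicity (int p) (a*d) = multiplicity (int p) (n*b)" using e by simp
  hence "multiplicity (int p) a + multiplicity (int p) d = multiplicity (int p) n + multiplicity (int p) b"
    using pe assms d n0 by (simp add: prime_elem_multiplicity_mult_distrib)
  thus ?thesis unfolding vp_def nd by simp
qed

lemma mult_sum:
  fixes m M :: nat
  assumes "prime p" "m > 0" "m \<le> M"
  shows "multiplicity (int p) (int m) = (\<Sum>l<M. if int p ^ Suc l dvd int m then 1 else 0)"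
proof -
  let ?e = "multiplicity (int p) (int m)"
  have "int p ^ ?e dvd int m" by (simp add: multiplicity_dvd)
  hence "p ^ ?e dvd m" by (metis of_nat_dvd_iff of_nat_power)
  hence "p ^ ?e \<le> m" using assms(2) by (simp add: dvd_imp_le)
  moreover have "?e < 2 ^ ?e" by simp
  moreover have "2 ^ ?e \<le> p ^ ?e" using prime_ge_2_nat[OF assms(1)] by (simp add: power_mono)
  ultimately have eM: "?e \<le> M" using assms(3) by linarith
  have "(\<Sum>l<M. if int p ^ Suc l dvd int m then 1 else 0) = (\<Sum>l<M. if l < ?e then 1 else (0::nat))"
    apply (intro sum.cong refl) apply (subst power_dvd_iff_le_multiplicity)
    using assms prime_elem_not_unit[of "int p"] by (auto simp add: Suc_le_eq)
  also have "\<dots> = card {l. l < M \<and> l < ?e}"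
    by (simp add: sum.If_cases lessThan_def Collect_conj_eq[symmetric] conj_commute)
  also have "{l. l < M \<and> l < ?e} = {..<?e}" using eM by auto
  finally show ?thesis by simp
qed

lemma Suc_div_split:
  fixes n P :: nat
  assumes "P > 0"
  shows "Suc n div P = n div P + (if P dvd Suc n then 1 else 0)"
proof -
  have "Suc n = n div P * P + Suc (n mod P)" by simp
  show ?thesis
  proof (cases "Suc (n mod P) = P")
    case True
    hence "Suc n = (n div P + 1) * P" using \<open>Suc n = _\<close> by simp
    hence "Suc n div P = n div P + 1" using assms by simp
    moreover have "P dvd Suc n" using \<open>Suc n = (n div P + 1) * P\<close> by (metis dvd_triv_right)
    ultimately show ?thesis by simp
  next
    case False
    hence lt: "Suc (n mod P) < P" using mod_less_divisor[OF assms, of n] by linarith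
    have e: "P * (n div P) + n mod P = n" using div_mult_mod_eq[of n P] by (simp add: mult.commute)
    have "Suc n div P = n div P"
    proof (rule div_nat_eqI)
      show "P * (n div P) \<le> Suc n" using e by linarith
      show "Suc n < P * Suc (n div P)" unfolding mult_Suc_right using e lt by linarith
    qed
    moreover have "Suc n mod P = Suc (n mod P)" using lt by (simp add: mod_Suc)
    hence "\<not> P dvd Suc n" by (simp add: dvd_eq_mod_eq_0)
    ultimately show ?thesis by simp
  qed
qed

lemma legendre:
  assumes "prime p" "n \<le> M"
  shows "multiplicity (int p) (fact n :: int) = (\<Sum>l<M. n div p ^ Suc l)"
  using assms(2)
proof (induction n)
  case 0
  then show ?case by simp
next
  case (Suc n)
  have pe: "prime_elem (int p)" using assms(1) by simp
  have pp: "\<And>l. p ^ Suc l > 0" using prime_gt_0_nat[OF assms(1)] by simp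
  have "multiplicity (int p) (fact (Suc n) :: int) = multiplicity (int p) (int (Suc n)) + multiplicity (int p) (fact n :: int)"
    by (simp add: fact_Suc prime_elem_multiplicity_mult_distrib[OF pe] del: of_nat_Suc)
  also have "\<dots> = (\<Sum>l<M. if int p ^ Suc l dvd int (Suc n) then 1 else 0) + (\<Sum>l<M. n div p ^ Suc l)"
    using Suc mult_sum[OF assms(1), of "Suc n" M] by simp
  also have "\<dots> = (\<Sum>l<M. (if p ^ Suc l dvd Suc n then 1 else 0) + n div p ^ Suc l)"
    by (simp only: sum.distrib of_nat_power[symmetric] of_nat_dvd_iff)
  also have "\<dots> = (\<Sum>l<M. Suc n div p ^ Suc l)"
    by (intro sum.cong refl) (subst Suc_div_split[OF pp], simp)
  finally show ?case .
qed

lemma U_sum: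
  fixes P m :: nat
  assumes "P > 0"
  shows "2 * (\<Sum>j<Suc m. int (j div P)) = 2 * int (m div P) * int (Suc m) - int P * int (m div P) * (int (m div P) + 1)"
proof (induction m)
  case 0
  then show ?case by simp
next
  case (Suc m)
  have s: "(\<Sum>j<Suc (Suc m). int (j div P)) = (\<Sum>j<Suc m. int (j div P)) + int (Suc m div P)" by simp
  show ?case
  proof (cases "P dvd Suc m")
    case True
    have d: "Suc m div P = m div P + 1" using Suc_div_split[OF assms, of m] True by simp
    have e: "int (Suc m) = int P * (int (m div P) + 1)"
      using True d by (metis dvd_mult_div_cancel of_nat_Suc of_nat_add of_nat_mult of_nat_1)
    have alg: "\<And>S q x P :: int. 2*S = 2*q*x - P*q*(q+1) \<Longrightarrow> x = P*(q+1) \<Longrightarrow> 2*(S + (q+1)) = 2*(q+1)*(x+1) - P*(q+1)*(q+2)"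
      by algebra
    show ?thesis unfolding s d using alg[OF Suc.IH e] by (simp add: algebra_simps)
  next
    case False
    have d: "Suc m div P = m div P" using Suc_div_split[OF assms, of m] False by simp
    show ?thesis unfolding s using Suc.IH d by (simp add: algebra_simps)
  qed
qed

definition hh :: "nat \<Rightarrow> nat \<Rightarrow> int" where
  "hh P m = int (2 * m div P) - int (m div P)"

lemma hh_step:
  fixes P m :: nat
  assumes "odd P" "P \<ge> 3"
  shows "hh P (Suc m) = hh P m \<or> (hh P (Suc m) = hh P m + 1 \<and> int (2 * Suc m) = (2 * hh P m + 1) * int P + 1)"
proof -
  obtain t where t: "P = 2 * t + 1" using assms(1) oddE by blast
  have t1: "t \<ge> 1" using assms(2) t by simp
  define q where "q = Suc m div P"
  define s where "s = Suc m mod P"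
  have sm: "Suc m = P * q + s" unfolding q_def s_def by simp
  have sP: "s < P" unfolding s_def using assms by simp
  have dv: "\<And>a b. b < P \<Longrightarrow> (P * a + b) div P = a" using assms by simp
  have e: "\<And>x. P*(2*x) = 2*(P*x)" by simp
  have e': "\<And>x. P*(2*x+1) = 2*(P*x) + P" by (simp add: algebra_simps)
  have gen: "hh P n = int x + (if y > t then 1 else 0)" if ny: "n = P * x + y" "y < P" for n x y
  proof (cases "y > t")
    case True
    have "2*n = P*(2*x+1) + (2 * y - P)" using ny e'[of x] True t by linarith
    moreover have "2 * y - P < P" using ny t by linarith
    ultimately have "2*n div P = 2*x+1" using dv[of "2 * y - P" "2*x+1"] by simp
    moreover have "n div P = x" using ny dv by simp
    ultimately show ?thesis unfolding hh_def using True by simp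
  next
    case False
    have "2*n = P*(2*x) + 2 * y" using ny e[of x] by linarith
    moreover have "2 * y < P" using False t by linarith
    ultimately have "2*n div P = 2*x" using dv[of "2 * y" "2*x"] by simp
    moreover have "n div P = x" using ny dv by simp
    ultimately show ?thesis unfolding hh_def using False by simp
  qed
  have hS: "hh P (Suc m) = int q + (if s > t then 1 else 0)" using gen[OF sm sP] .
  show ?thesis
  proof (cases "s = 0")
    case True
    have q1: "q \<ge> 1" using sm True by (cases q) auto
    obtain q' where q': "q = Suc q'" using q1 by (cases q) auto
    have "P * q = P * q' + P" using q' by simp
    hence m1: "m = P * q' + 2 * t" using sm True q' t by linarith
    have m2: "2 * m = P * (2 * q' + 1) + (2 * t - 1)" using m1 t t1 e'[of q'] by linarith
    have "m div P = q'" using m1 dv[of "2 * t" q'] t by simp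
    moreover have "2 * m div P = 2 * q' + 1" using m2 dv[of "2 * t - 1" "2 * q' + 1"] t by simp
    ultimately have "hh P m = int q" unfolding hh_def using q' by simp
    thus ?thesis using hS True by simp
  next
    case False
    have m: "m = P * q + (s - 1)" using sm False by simp
    have hm: "hh P m = int q + (if s - 1 > t then 1 else 0)" using gen[OF m] sP by simp
    show ?thesis
    proof (cases "s = t + 1")
      case True
      have "int (2 * Suc m) = (2 * int q + 1) * int P + 1" using sm True t by (simp add: algebra_simps)
      thus ?thesis using hS hm True by simp
    next
      case False
      thus ?thesis using hS hm \<open>s \<noteq> 0\<close> by auto
    qed
  qed
qed

lemma O_sum:
  fixes P m :: nat
  assumes "odd P" "P \<ge> 3"
  shows "2 * (\<Sum>i<Suc m. hh P i) = (2 * int m + 1) * hh P m - int P * (hh P m)^2"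
proof (induction m)
  case 0
  then show ?case by (simp add: hh_def)
next
  case (Suc m)
  have s: "(\<Sum>i<Suc (Suc m). hh P i) = (\<Sum>i<Suc m. hh P i) + hh P (Suc m)" by simp
  from hh_step[OF assms, of m] show ?case
  proof
    assume "hh P (Suc m) = hh P m"
    thus ?thesis unfolding s using Suc.IH by (simp add: algebra_simps)
  next
    assume a: "hh P (Suc m) = hh P m + 1 \<and> int (2 * Suc m) = (2 * hh P m + 1) * int P + 1"
    hence a1: "hh P (Suc m) = hh P m + 1" and a2: "2 * int m + 2 = (2 * hh P m + 1) * int P + 1" by auto
    show ?thesis unfolding s using Suc.IH a1 a2 by (simp add: algebra_simps power2_eq_square)
  qed
qed



lemma prod_tele:
  fixes f :: "nat \<Rightarrow> real"
  assumes "a \<le> b" "\<And>j. j \<in> {a..<b+k} \<Longrightarrow> f j \<noteq> 0"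
  shows "(\<Prod>j\<in>{a..<b}. f (j+k) / f j) = (\<Prod>i<k. f (b+i) / f (a+i))"
proof -
  have s1: "(\<Prod>j\<in>{a..<b}. f (j+k)) = prod f {a+k..<b+k}"
    using prod.shift_bounds_nat_ivl[of f a k b] by simp
  have s2: "(\<Prod>i<k. f (a+i)) = prod f {a..<a+k}"
    using prod.shift_bounds_nat_ivl[of f 0 a k] by (simp add: lessThan_atLeast0 add.commute)
  have s3: "(\<Prod>i<k. f (b+i)) = prod f {b..<b+k}"
    using prod.shift_bounds_nat_ivl[of f 0 b k] by (simp add: lessThan_atLeast0 add.commute)
  have e: "(\<Prod>j\<in>{a..<b}. f (j+k)) * (\<Prod>i<k. f (a+i)) = prod f {a..<b} * (\<Prod>i<k. f (b+i))"
    unfolding s1 s2 s3 using assms(1) prod.atLeastLessThan_concat[of a "a+k" "b+k" f]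
      prod.atLeastLessThan_concat[of a b "b+k" f]
    by (simp add: mult.commute)
  have nz1: "prod f {a..<b} \<noteq> 0" using assms by (simp add: prod_zero_iff)
  have nz2: "(\<Prod>i<k. f (a+i)) \<noteq> 0" using assms by (simp add: prod_zero_iff)
  have "(\<Prod>j\<in>{a..<b}. f (j+k) / f j) = (\<Prod>j\<in>{a..<b}. f (j+k)) / prod f {a..<b}"
    by (simp add: prod_dividef)
  also have "\<dots> = (\<Prod>i<k. f (b+i)) / (\<Prod>i<k. f (a+i))"
    using e nz1 nz2 by (simp add: field_simps)
  also have "\<dots> = (\<Prod>i<k. f (b+i) / f (a+i))" by (simp add: prod_dividef)
  finally show ?thesis .
qed

lemma Gamma_nat: "n \<ge> 1 \<Longrightarrow> Gamma (real n) = fact (n - 1)"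
  using Gamma_fact[of "n - 1", where 'a=real] by (simp add: of_nat_diff)

lemma poch_Gamma_real: "z > 0 \<Longrightarrow> Gamma (z + real n) / Gamma z = pochhammer z n"
  by (subst pochhammer_Gamma) (auto simp: nonpos_Ints_def)

lemma GU_prod:
  fixes N k :: nat
  shows "(\<Prod>j=1..N. Gamma (real j) * Gamma (real j + 2 * real k) / (Gamma (real j + real k))^2)
    = (\<Prod>i<k. fact i / fact (k+i)) * (\<Prod>i<k. pochhammer (real (N+1+i)) k)"
proof -
  define f1 where "f1 j = Gamma (real j + real k)" for j
  define f2 where "f2 j = Gamma (real j)" for j
  have fac: "Gamma (real j) * Gamma (real j + 2 * real k) / (Gamma (real j + real k))^2
      = (f1 (j+k) / f1 j) / (f2 (j+k) / f2 j)" if "j \<ge> 1" for j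
  proof -
    have "Gamma (real j) > 0" "Gamma (real j + real k) > 0" using that by auto
    thus ?thesis unfolding f1_def f2_def by (simp add: power2_eq_square field_simps)
  qed
  have "(\<Prod>j=1..N. Gamma (real j) * Gamma (real j + 2 * real k) / (Gamma (real j + real k))^2)
     = (\<Prod>j\<in>{1..<N+1}. (f1 (j+k) / f1 j) / (f2 (j+k) / f2 j))"
    unfolding atLeastLessThanSuc_atLeastAtMost[symmetric] Suc_eq_plus1[symmetric] by (intro prod.cong) (auto simp: fac)
  also have "\<dots> = (\<Prod>j\<in>{1..<N+1}. f1 (j+k) / f1 j) / (\<Prod>j\<in>{1..<N+1}. f2 (j+k) / f2 j)"
    by (rule prod_dividef)
  also have "\<dots> = (\<Prod>i<k. f1 (N+1+i) / f1 (1+i)) / (\<Prod>i<k. f2 (N+1+i) / f2 (1+i))"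
  proof -
    have t1: "(\<Prod>j\<in>{1..<N+1}. f1 (j+k) / f1 j) = (\<Prod>i<k. f1 (N+1+i) / f1 (1+i))"
      apply (rule prod_tele) apply simp
      subgoal for j proof -
        assume "j \<in> {1..<N + 1 + k}"
        hence "real j + real k > 0" by simp
        thus ?thesis unfolding f1_def using Gamma_real_pos by (metis less_irrefl)
      qed
      done
    have t2: "(\<Prod>j\<in>{1..<N+1}. f2 (j+k) / f2 j) = (\<Prod>i<k. f2 (N+1+i) / f2 (1+i))"
      apply (rule prod_tele) apply simp
      subgoal for j proof -
        assume "j \<in> {1..<N + 1 + k}"
        hence "real j > 0" by simp
        thus ?thesis unfolding f2_def using Gamma_real_pos by (metis less_irrefl)
      qed
      done
    show ?thesis unfolding t1 t2 ..
  qed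
  also have "\<dots> = (\<Prod>i<k. (f1 (N+1+i) / f1 (1+i)) / (f2 (N+1+i) / f2 (1+i)))"
    by (rule prod_dividef[symmetric])
  also have "\<dots> = (\<Prod>i<k. fact i / fact (k+i) * pochhammer (real (N+1+i)) k)"
  proof (intro prod.cong refl)
    fix i assume "i \<in> {..<k}"
    have a: "f1 (N+1+i) / f2 (N+1+i) = pochhammer (real (N+1+i)) k"
      unfolding f1_def f2_def by (rule poch_Gamma_real) simp
    have b: "f2 (1+i) = fact i" unfolding f2_def using Gamma_fact[of i, where 'a=real] by simp
    have c: "f1 (1+i) = fact (k+i)" unfolding f1_def using Gamma_fact[of "k+i", where 'a=real] by (simp add: add_ac)
    have "f2 (N+1+i) > 0" unfolding f2_def by simp
    thus "(f1 (N+1+i) / f1 (1+i)) / (f2 (N+1+i) / f2 (1+i)) = fact i / fact (k+i) * pochhammer (real (N+1+i)) k"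
      using a b c by (simp add: field_simps)
  qed
  also have "\<dots> = (\<Prod>i<k. fact i / fact (k+i)) * (\<Prod>i<k. pochhammer (real (N+1+i)) k)"
    by (rule prod.distrib)
  finally show ?thesis .
qed

lemma lim_shift: "((\<lambda>N. (real N + c) / real N) \<longlongrightarrow> 1) sequentially"
proof -
  have "((\<lambda>N. 1 + c / real N) \<longlongrightarrow> 1 + 0) sequentially"
    by (intro tendsto_intros)
  moreover have "eventually (\<lambda>N. 1 + c / real N = (real N + c) / real N) sequentially"
    using eventually_gt_at_top[of "0::nat"] by eventually_elim (simp add: field_simps)
  ultimately show ?thesis using tendsto_cong by force
qed

lemma lim_shift2: "((\<lambda>N. (2 * real N + c) / real N) \<longlongrightarrow> 2) sequentially"
proof -
  have "((\<lambda>N. 2 + c / real N) \<longlongrightarrow> 2 + 0) sequentially"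
    by (intro tendsto_intros)
  moreover have "eventually (\<lambda>N. 2 + c / real N = (2 * real N + c) / real N) sequentially"
    using eventually_gt_at_top[of "0::nat"] by eventually_elim (simp add: field_simps)
  ultimately show ?thesis using tendsto_cong by force
qed

lemma poch_over: "N > 0 \<Longrightarrow> pochhammer (real N + c) n / real N ^ n = (\<Prod>m<n. (real N + (c + real m)) / real N)"
  by (simp add: pochhammer_prod prod_dividef lessThan_atLeast0 add_ac)

lemma lim_poch: "((\<lambda>N. pochhammer (real N + c) n / real N ^ n) \<longlongrightarrow> 1) sequentially"
proof -
  have "((\<lambda>N. \<Prod>m<n. (real N + (c + real m)) / real N) \<longlongrightarrow> (\<Prod>m<n. 1)) sequentially"
    by (intro tendsto_prod lim_shift)
  moreover have "eventually (\<lambda>N. (\<Prod>m<n. (real N + (c + real m)) / real N) = pochhammer (real N + c) n / real N ^ n) sequentially"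
    using eventually_gt_at_top[of "0::nat"] by eventually_elim (simp add: poch_over)
  ultimately show ?thesis using tendsto_cong by force
qed

lemma GU_val: "G_U (real k) = (\<Prod>i<k. fact i / fact (k+i))"
proof -
  define C where "C = (\<Prod>i<k. fact i / fact (k+i) :: real)"
  have ev: "eventually (\<lambda>N. C * (\<Prod>i<k. pochhammer (real N + real (1+i)) k / real N ^ k) =
     real N powr (- (real k ^ 2)) * (\<Prod>j=1..N. Gamma (real j) * Gamma (real j + 2 * real k) / (Gamma (real j + real k))^2)) sequentially"
    using eventually_gt_at_top[of "0::nat"]
  proof eventually_elim
    case (elim N)
    have "real N powr (- (real k ^ 2)) = inverse (real N ^ (k * k))"
      using elim by (simp add: powr_minus power2_eq_square powr_realpow[symmetric] of_nat_mult[symmetric] del: of_nat_mult)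
    also have "\<dots> = inverse (\<Prod>i<k. real N ^ k)" by (simp add: power_mult)
    finally have pw: "real N powr (- (real k ^ 2)) = inverse (\<Prod>i<k. real N ^ k)" .
    show ?case unfolding GU_prod pw C_def
      by (simp add: divide_inverse prod.distrib power_inverse mult_ac add_ac)
  qed
  have "((\<lambda>N. C * (\<Prod>i<k. pochhammer (real N + real (1+i)) k / real N ^ k)) \<longlongrightarrow> C * (\<Prod>i<k. 1)) sequentially"
    by (intro tendsto_intros lim_poch)
  hence "((\<lambda>N. real N powr (- (real k ^ 2)) * (\<Prod>j=1..N. Gamma (real j) * Gamma (real j + 2 * real k) / (Gamma (real j + real k))^2)) \<longlongrightarrow> C) sequentially"
    using tendsto_cong[OF ev] by simp
  thus ?thesis unfolding G_U_def C_def by (rule limI)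
qed



lemma half_poch:
  "4 ^ N * pochhammer (real i + 1/2) N * fact (2*i) * fact (i+N) = (fact (2*i+2*N) * fact i :: real)"
proof (induction N)
  case 0
  then show ?case by simp
next
  case (Suc N)
  have f1: "fact (i + Suc N) = (fact (i+N) :: real) * (real (i+N) + 1)"
    by (simp add: algebra_simps)
  have f2: "fact (2*i + 2 * Suc N) = (fact (2*i+2*N) :: real) * (real (2*i+2*N) + 1) * (real (2*i+2*N) + 2)"
  proof -
    have "2*i + 2 * Suc N = Suc (Suc (2*i+2*N))" by simp
    thus ?thesis by (simp add: algebra_simps)
  qed
  have "4 ^ Suc N * pochhammer (real i + 1/2) (Suc N) * fact (2*i) * fact (i + Suc N)
      = (4 ^ N * pochhammer (real i + 1/2) N * fact (2*i) * fact (i+N)) * (4 * (real i + 1/2 + real N) * (real (i+N) + 1))"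
    unfolding f1 pochhammer_Suc by (simp add: algebra_simps)
  also have "\<dots> = fact (2*i+2*N) * fact i * (4 * (real i + 1/2 + real N) * (real (i+N) + 1))"
    using Suc.IH by simp
  also have "\<dots> = fact (2*i + 2 * Suc N) * fact i" unfolding f2 by (simp add: algebra_simps)
  finally show ?case .
qed

lemma GO_prod:
  fixes N k :: nat
  assumes "N \<ge> 1"
  shows "(\<Prod>j=1..N. Gamma (real N + real j - 1) * Gamma (real j - 1/2 + real k)
                 / (Gamma (real N + real j - 1 + real k) * Gamma (real j - 1/2)))
    = (\<Prod>i<k. pochhammer (real i + 1/2) N / pochhammer (real (N+i)) N)"
proof -
  define fA where "fA j = Gamma (real j - 1/2)" for j
  define fB where "fB j = Gamma (real N + real j - 1)" for j
  have posA: "fA j > 0" if "j \<ge> 1" for j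
  proof -
    have "real j - 1/2 > 0" using that by simp
    thus ?thesis unfolding fA_def by simp
  qed
  have posB: "fB j > 0" if "j \<ge> 1" for j
  proof -
    have "real N + real j - 1 > 0" using that assms by simp
    thus ?thesis unfolding fB_def by simp
  qed
  have fac: "Gamma (real N + real j - 1) * Gamma (real j - 1/2 + real k)
                 / (Gamma (real N + real j - 1 + real k) * Gamma (real j - 1/2))
      = (fA (j+k) / fA j) / (fB (j+k) / fB j)" if "j \<ge> 1" for j
  proof -
    have a: "fA (j+k) = Gamma (real j - 1/2 + real k)" unfolding fA_def by (simp add: algebra_simps)
    have b: "fB (j+k) = Gamma (real N + real j - 1 + real k)" unfolding fB_def by (simp add: algebra_simps)
    have "fA j > 0" "fB j > 0" "fB (j+k) > 0" using posA posB that by auto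
    thus ?thesis unfolding a b by (simp add: fA_def fB_def field_simps)
  qed
  have "(\<Prod>j=1..N. Gamma (real N + real j - 1) * Gamma (real j - 1/2 + real k)
                 / (Gamma (real N + real j - 1 + real k) * Gamma (real j - 1/2)))
     = (\<Prod>j\<in>{1..<N+1}. (fA (j+k) / fA j) / (fB (j+k) / fB j))"
    unfolding atLeastLessThanSuc_atLeastAtMost[symmetric] Suc_eq_plus1[symmetric] by (intro prod.cong) (auto simp: fac)
  also have "\<dots> = (\<Prod>j\<in>{1..<N+1}. fA (j+k) / fA j) / (\<Prod>j\<in>{1..<N+1}. fB (j+k) / fB j)"
    by (rule prod_dividef)
  also have "\<dots> = (\<Prod>i<k. fA (N+1+i) / fA (1+i)) / (\<Prod>i<k. fB (N+1+i) / fB (1+i))"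
  proof -
    have t1: "(\<Prod>j\<in>{1..<N+1}. fA (j+k) / fA j) = (\<Prod>i<k. fA (N+1+i) / fA (1+i))"
      apply (rule prod_tele) apply simp
      subgoal for j using posA[of j] by simp
      done
    have t2: "(\<Prod>j\<in>{1..<N+1}. fB (j+k) / fB j) = (\<Prod>i<k. fB (N+1+i) / fB (1+i))"
      apply (rule prod_tele) apply simp
      subgoal for j using posB[of j] by simp
      done
    show ?thesis unfolding t1 t2 ..
  qed
  also have "\<dots> = (\<Prod>i<k. (fA (N+1+i) / fA (1+i)) / (fB (N+1+i) / fB (1+i)))"
    by (rule prod_dividef[symmetric])
  also have "\<dots> = (\<Prod>i<k. pochhammer (real i + 1/2) N / pochhammer (real (N+i)) N)"
  proof (intro prod.cong refl)
    fix i assume "i \<in> {..<k}"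
    have a1: "fA (N+1+i) = Gamma ((real i + 1/2) + real N)" unfolding fA_def by (simp add: algebra_simps)
    have a2: "fA (1+i) = Gamma (real i + 1/2)" unfolding fA_def by (simp add: algebra_simps)
    have b1: "fB (N+1+i) = Gamma (real (N+i) + real N)" unfolding fB_def by (simp add: algebra_simps)
    have b2: "fB (1+i) = Gamma (real (N+i))" unfolding fB_def by (simp add: algebra_simps)
    have "fA (N+1+i) / fA (1+i) = pochhammer (real i + 1/2) N"
      unfolding a1 a2 by (rule poch_Gamma_real) simp
    moreover have "fB (N+1+i) / fB (1+i) = pochhammer (real (N+i)) N"
      unfolding b1 b2 using assms by (intro poch_Gamma_real) simp
    ultimately show "(fA (N+1+i) / fA (1+i)) / (fB (N+1+i) / fB (1+i)) = pochhammer (real i + 1/2) N / pochhammer (real (N+i)) N"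
      by simp
  qed
  finally show ?thesis .
qed

lemma alg_GO:
  fixes a b c d e n s :: real
  assumes "c>0" "d>0" "e>0" "n>0" "s>0"
  shows "(a*b/(c*(s*d))) / (e/d) / n^i = b/c * ((a/e)/n^(i+1) * (n/s))"
  using assms by (simp add: field_simps)

lemma GO_term:
  fixes N i :: nat
  assumes "N \<ge> 1"
  shows "4 ^ N * pochhammer (real i + 1/2) N / pochhammer (real (N+i)) N / real N ^ i
    = fact i / fact (2*i) * ((\<Prod>m<i+1. (2 * real N + (real i + real m)) / real N) * (real N / real (N+i)))"
proof -
  have N0: "real N > 0" using assms by simp
  have A: "4 ^ N * pochhammer (real i + 1/2) N = fact (2*i+2*N) * fact i / (fact (2*i) * fact (i+N))"
    using half_poch[of N i] by (simp add: field_simps)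
  have B: "pochhammer (real (N+i)) N = fact (2*N+i-1) / fact (N+i-1)"
  proof -
    have "pochhammer (real (N+i)) N = Gamma (real (N+i) + real N) / Gamma (real (N+i))"
      using assms by (intro poch_Gamma_real[symmetric]) simp
    also have "\<dots> = fact (2*N+i-1) / fact (N+i-1)"
      using assms Gamma_nat[of "2*N+i"] Gamma_nat[of "N+i"] by (simp add: algebra_simps)
    finally show ?thesis .
  qed
  have C: "fact (2*i+2*N) / fact (2*N+i-1) = pochhammer (real (2*N+i)) (i+1)"
  proof -
    have "pochhammer (real (2*N+i)) (i+1) = Gamma (real (2*N+i) + real (i+1)) / Gamma (real (2*N+i))"
      using assms by (intro poch_Gamma_real[symmetric]) simp
    also have "\<dots> = fact (2*i+2*N) / fact (2*N+i-1)"
      using assms Gamma_nat[of "2*N+i"] Gamma_fact[of "2*i+2*N", where 'a=real] by (simp add: algebra_simps)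
    finally show ?thesis by simp
  qed
  have Dd: "fact (i+N) = real (N+i) * (fact (N+i-1) :: real)"
    using assms fact_num_eq_if[of "i+N", where 'a=real] by (simp add: add.commute)
  have E: "pochhammer (real (2*N+i)) (i+1) / real N ^ (i+1) = (\<Prod>m<i+1. (2 * real N + (real i + real m)) / real N)"
    by (simp add: pochhammer_prod prod_dividef lessThan_atLeast0 add_ac)
  have pf: "fact (2*N+i-1) > (0::real)" "fact (N+i-1) > (0::real)" "fact (2*i) > (0::real)" by auto
  have "4 ^ N * pochhammer (real i + 1/2) N / pochhammer (real (N+i)) N / real N ^ i
     = fact i / fact (2*i) * ((fact (2*i+2*N) / fact (2*N+i-1)) / real N ^ (i+1) * (real N / real (N+i)))"
    unfolding A B Dd by (rule alg_GO) (use N0 pf assms in auto)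
  also have "\<dots> = fact i / fact (2*i) * ((\<Prod>m<i+1. (2 * real N + (real i + real m)) / real N) * (real N / real (N+i)))"
    unfolding C E ..
  finally show ?thesis .
qed

lemma lim_term:
  "((\<lambda>N. (\<Prod>m<i+1. (2 * real N + (real i + real m)) / real N) * (real N / real (N+i))) \<longlongrightarrow> 2 ^ (i+1) * 1) sequentially"
proof -
  have l1: "((\<lambda>N. (\<Prod>m<i+1. (2 * real N + (real i + real m)) / real N)) \<longlongrightarrow> (\<Prod>m<i+1. 2)) sequentially"
    by (intro tendsto_prod lim_shift2)
  have "((\<lambda>N. inverse ((real N + real i) / real N)) \<longlongrightarrow> inverse 1) sequentially"
    by (intro tendsto_inverse lim_shift) simp
  moreover have "eventually (\<lambda>N. inverse ((real N + real i) / real N) = real N / real (N+i)) sequentially"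
    using eventually_gt_at_top[of "0::nat"] by eventually_elim simp
  ultimately have l2: "((\<lambda>N. real N / real (N+i)) \<longlongrightarrow> 1) sequentially" using tendsto_cong by force
  show ?thesis using tendsto_mult[OF l1 l2] by simp
qed

lemma sum_id2: "2 * (\<Sum>i<(k::nat). i) = k * (k - 1)"
proof (induction k)
  case 0 show ?case by simp
next
  case (Suc k) thus ?case by (cases k) (simp_all add: algebra_simps)
qed

lemma GO_val: "G_O (real k) = 1/2 * (\<Prod>i<k. fact i / fact (2*i) * 2 ^ (i+1))"
proof -
  define T where "T N i = fact i / fact (2*i) * ((\<Prod>m<i+1. (2 * real N + (real i + real m)) / real N) * (real N / real (N+i)))" for N i
  have ev: "eventually (\<lambda>N. (\<Prod>i<k. T N i) = real N powr (- (real k * (real k - 1) / 2)) * 2 powr (2 * real N * real k) *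
      (\<Prod>j=1..N. Gamma (real N + real j - 1) * Gamma (real j - 1/2 + real k)
                 / (Gamma (real N + real j - 1 + real k) * Gamma (real j - 1/2)))) sequentially"
    using eventually_ge_at_top[of "1::nat"]
  proof eventually_elim
    case (elim N)
    have N0: "real N > 0" using elim by simp
    have s: "real k * (real k - 1) / 2 = real (\<Sum>i<k. i)"
    proof -
      have "real (2 * (\<Sum>i<k. i)) = real (k * (k - 1))" using sum_id2 by metis
      thus ?thesis by (cases k) (simp_all add: algebra_simps)
    qed
    have p1: "real N powr (- (real k * (real k - 1) / 2)) = inverse (\<Prod>i<k. real N ^ i)"
    proof -
      have "real N powr (- real (\<Sum>i<k. i)) = inverse (real N powr real (\<Sum>i<k. i))"
        by (rule powr_minus)
      also have "real N powr real (\<Sum>i<k. i) = real N ^ (\<Sum>i<k. i)"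
        by (rule powr_realpow[OF N0])
      also have "\<dots> = (\<Prod>i<k. real N ^ i)" by (rule power_sum)
      finally show ?thesis unfolding s .
    qed
    have p2: "(2::real) powr (2 * real N * real k) = (\<Prod>i<k. 4 ^ N)"
    proof -
      have "(2::real) powr (2 * real N * real k) = 2 powr real (2 * N * k)" by simp
      also have "\<dots> = 2 ^ (2 * N * k)" by (rule powr_realpow) simp
      also have "\<dots> = (4 ^ N) ^ k" by (simp add: power_mult)
      finally show ?thesis by simp
    qed
    have "real N powr (- (real k * (real k - 1) / 2)) * 2 powr (2 * real N * real k) *
      (\<Prod>j=1..N. Gamma (real N + real j - 1) * Gamma (real j - 1/2 + real k)
                 / (Gamma (real N + real j - 1 + real k) * Gamma (real j - 1/2)))
      = (\<Prod>i<k. 4 ^ N) * (\<Prod>i<k. pochhammer (real i + 1/2) N / pochhammer (real (N+i)) N) / (\<Prod>i<k. real N ^ i)"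
      unfolding p1 p2 GO_prod[OF elim] by (simp only: divide_inverse mult.assoc mult.commute mult.left_commute)
    also have "\<dots> = (\<Prod>i<k. 4 ^ N * pochhammer (real i + 1/2) N / pochhammer (real (N+i)) N / real N ^ i)"
      by (simp only: prod_dividef prod.distrib times_divide_eq_right)
    also have "\<dots> = (\<Prod>i<k. T N i)"
      unfolding T_def by (intro prod.cong refl GO_term[OF elim])
    finally show ?case by simp
  qed
  have "((\<lambda>N. \<Prod>i<k. T N i) \<longlongrightarrow> (\<Prod>i<k. fact i / fact (2*i) * (2 ^ (i+1) * 1))) sequentially"
    unfolding T_def by (intro tendsto_prod tendsto_mult[OF tendsto_const] lim_term)
  hence "((\<lambda>N. real N powr (- (real k * (real k - 1) / 2)) * 2 powr (2 * real N * real k) *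
      (\<Prod>j=1..N. Gamma (real N + real j - 1) * Gamma (real j - 1/2 + real k)
                 / (Gamma (real N + real j - 1 + real k) * Gamma (real j - 1/2)))) \<longlongrightarrow> (\<Prod>i<k. fact i / fact (2*i) * 2 ^ (i+1))) sequentially"
    using tendsto_cong[OF ev] by simp
  from limI[OF this] show ?thesis unfolding G_O_def by simp
qed



lemma R_hh_nat:
  fixes P m :: nat
  assumes "odd P" "P \<ge> 3" "m \<ge> 1"
  shows "((2*m - 1) div P + 1) div 2 + m div P = 2*m div P"
proof -
  obtain t where t: "P = 2 * t + 1" using assms(1) oddE by blast
  have t1: "t \<ge> 1" using assms(2) t by simp
  define q where "q = m div P"
  define s where "s = m mod P"
  have sm: "m = P * q + s" unfolding q_def s_def by simp
  have sP: "s < P" unfolding s_def using assms by simp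
  have dv: "\<And>a b. b < P \<Longrightarrow> (P * a + b) div P = a" using assms by simp
  have mq: "m div P = q" using q_def by simp
  show ?thesis
  proof (cases "s = 0")
    case True
    obtain q' where q': "q = Suc q'" using sm True assms(3) by (cases q) auto
    have m1: "m = P*q' + P" using sm True q' by simp
    have e1: "P*(2*q'+1) = 2*(P*q') + P" by (simp add: algebra_simps)
    have "2*m - 1 = P * (2*q'+1) + (P - 1)" using m1 e1 assms(2) by linarith
    hence "(2*m - 1) div P = 2*q'+1" using dv[of "P - 1" "2*q'+1"] assms(2) by simp
    moreover have "2*m div P = 2*q"
    proof -
      have "2*m = P*(2*q)" using sm True by simp
      thus ?thesis using assms(2) by simp
    qed
    ultimately show ?thesis using mq q' by simp
  next
    case False
    have e: "P*(2*q) = 2*(P*q)" by simp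
    have e': "P*(2*q+1) = 2*(P*q) + P" by (simp add: algebra_simps)
    show ?thesis
    proof (cases "s \<le> t")
      case True
      have "2*m - 1 = P * (2*q) + (2 * s - 1)" using sm False e by linarith
      moreover have "2 * s - 1 < P" using True t by linarith
      ultimately have "(2*m - 1) div P = 2*q" using dv[of "2 * s - 1" "2*q"] by simp
      moreover have "2*m = P * (2*q) + 2 * s" using sm e by linarith
      moreover have "2 * s < P" using True t by linarith
      ultimately have "(2*m - 1) div P = 2*q" "2*m div P = 2*q" using dv[of "2 * s" "2*q"] by simp_all
      thus ?thesis using mq by simp
    next
      case False
      have "2*m - 1 = P * (2*q+1) + (2 * s - 1 - P)" using sm False e' t by linarith
      moreover have "2 * s - 1 - P < P" using sP t by linarith
      ultimately have r1: "(2*m - 1) div P = 2*q+1" using dv[of "2 * s - 1 - P" "2*q+1"] by simp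
      have "2*m = P * (2*q+1) + (2 * s - P)" using sm False e' t by linarith
      moreover have "2 * s - P < P" using sP t by linarith
      ultimately have "2*m div P = 2*q+1" using dv[of "2 * s - P" "2*q+1"] by simp
      thus ?thesis using mq r1 by simp
    qed
  qed
qed

lemma R_hh:
  fixes P m :: nat
  assumes "odd P" "P \<ge> 3"
  shows "((2 * int m - 1) div int P + 1) div 2 = hh P m"
proof (cases "m = 0")
  case True
  have "(-1::int) div int P = -1" using assms by (intro div_eq_minus1) simp
  thus ?thesis using True by (simp add: hh_def)
next
  case False
  have e: "2 * int m - 1 = int (2*m - 1)" using False by simp
  have "((2 * int m - 1) div int P + 1) div 2 = int (((2*m - 1) div P + 1) div 2)"
    unfolding e by (simp add: zdiv_int)
  also have "\<dots> = hh P m"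
    using R_hh_nat[OF assms, of m] False unfolding hh_def by simp
  finally show ?thesis .
qed

lemma sum_split_nat: fixes f :: "nat \<Rightarrow> int" and k m :: nat
  shows "(\<Sum>j<k+m. f j) = (\<Sum>j<k. f j) + (\<Sum>i<m. f (k+i))"
  by (induction m) (simp_all add: add_ac)

lemma termU:
  fixes P k :: nat
  assumes "P > 0" "k > 0"
  shows "real_of_int \<lfloor>real k ^ 2 / real P\<rfloor>
              + (2 * real k - real P) * real_of_int \<lfloor>(real k - 1) / real P\<rfloor>
              + (real P / 2 - 2 * real k) * real_of_int \<lfloor>(2 * real k - 1) / real P\<rfloor>
              - real P * (real_of_int \<lfloor>(real k - 1) / real P\<rfloor>)^2
              + real P / 2 * (real_of_int \<lfloor>(2 * real k - 1) / real P\<rfloor>)^2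
     = real_of_int (int (k^2 div P) + (\<Sum>i<k. int (i div P)) - (\<Sum>i<k. int ((k+i) div P)))"
proof -
  have f1: "\<lfloor>real k ^ 2 / real P\<rfloor> = int (k^2 div P)"
    using floor_divide_of_nat_eq[of "k^2" P] by simp
  have f2: "\<lfloor>(real k - 1) / real P\<rfloor> = int ((k-1) div P)"
    using floor_divide_of_nat_eq[of "k-1" P] assms by (simp add: of_nat_diff)
  have f3: "\<lfloor>(2 * real k - 1) / real P\<rfloor> = int ((2*k-1) div P)"
    using floor_divide_of_nat_eq[of "2*k-1" P] assms by (simp add: of_nat_diff)
  define q1 where "q1 = int ((k-1) div P)"
  define q2 where "q2 = int ((2*k-1) div P)"
  define S1 where "S1 = (\<Sum>j<k. int (j div P))"
  define S2 where "S2 = (\<Sum>j<2*k. int (j div P))"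
  have h1: "2 * S1 = 2 * q1 * int k - int P * q1 * (q1 + 1)"
    using U_sum[OF assms(1), of "k-1"] assms unfolding S1_def q1_def by simp
  have h2: "2 * S2 = 2 * q2 * (2 * int k) - int P * q2 * (q2 + 1)"
    using U_sum[OF assms(1), of "2*k-1"] assms unfolding S2_def q2_def by simp
  have sp: "(\<Sum>i<k. int ((k+i) div P)) = S2 - S1"
    using sum_split_nat[of "\<lambda>j. int (j div P)" k k] unfolding S1_def S2_def by (simp add: mult_2)
  have "real_of_int (int (k^2 div P) + S1 - (S2 - S1)) =
     real_of_int (int (k^2 div P)) + (2 * real k - real P) * real_of_int q1
      + (real P / 2 - 2 * real k) * real_of_int q2 - real P * (real_of_int q1)^2 + real P / 2 * (real_of_int q2)^2"
  proof -
    have H1: "2 * real_of_int S1 = 2 * real_of_int q1 * real k - real P * real_of_int q1 * (real_of_int q1 + 1)"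
      using arg_cong[OF h1, of real_of_int] by simp
    have H2: "2 * real_of_int S2 = 2 * real_of_int q2 * (2 * real k) - real P * real_of_int q2 * (real_of_int q2 + 1)"
      using arg_cong[OF h2, of real_of_int] by simp
    show ?thesis using H1 H2 by (simp add: power2_eq_square algebra_simps)
  qed
  thus ?thesis unfolding f1 f2 f3 sp q1_def q2_def S1_def by simp
qed



lemma termO:
  fixes P k :: nat
  assumes "odd P" "P \<ge> 3" "k > 0"
  shows "real_of_int \<lfloor>(real k * (real k - 1) / 2) / real P\<rfloor>
              - (real k - 1/2) * real_of_int (floor2 ((2 * real k - 3) / real P))
              + real P / 2 * (real_of_int (floor2 ((2 * real k - 3) / real P)))^2
     = real_of_int (int ((\<Sum>i<k. i) div P) - (\<Sum>i<k. hh P i))"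
proof -
  have T: "real k * (real k - 1) / 2 = real (\<Sum>i<k. i)"
  proof -
    have "real (2 * (\<Sum>i<k. i)) = real (k * (k - 1))" using sum_id2 by metis
    thus ?thesis using assms(3) by (simp add: of_nat_diff algebra_simps)
  qed
  have f1: "\<lfloor>real (\<Sum>i<k. i) / real P\<rfloor> = int ((\<Sum>i<k. i) div P)"
    by (rule floor_divide_of_nat_eq)
  have fl: "\<lfloor>(2 * real k - 3) / real P\<rfloor> = (2 * int k - 3) div int P"
  proof -
    have "(2 * real k - 3) / real P = real_of_int (2 * int k - 3) / real_of_int (int P)" by simp
    thus ?thesis by (simp only: floor_divide_of_int_eq)
  qed
  define h where "h = hh P (k-1)"
  have f2: "floor2 ((2 * real k - 3) / real P) = h"
  proof -
    have "(real_of_int ((2 * int k - 3) div int P) + 1) / 2 = real_of_int ((2 * int k - 3) div int P + 1) / real_of_int 2"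
      by simp
    hence "floor2 ((2 * real k - 3) / real P) = ((2 * int k - 3) div int P + 1) div 2"
      unfolding floor2_def fl by (simp only: floor_divide_of_int_eq)
    also have "2 * int k - 3 = 2 * int (k-1) - 1" using assms(3) by simp
    also have "((2 * int (k-1) - 1) div int P + 1) div 2 = h" unfolding h_def by (rule R_hh[OF assms(1,2)])
    finally show ?thesis .
  qed
  have os: "2 * (\<Sum>i<k. hh P i) = (2 * int (k-1) + 1) * h - int P * h^2"
    using O_sum[OF assms(1,2), of "k-1"] assms(3) unfolding h_def by simp
  have os': "2 * real_of_int (\<Sum>i<k. hh P i) = (2 * real k - 1) * real_of_int h - real P * (real_of_int h)^2"
    using arg_cong[OF os, of real_of_int] assms(3) by (simp add: of_nat_diff)
  show ?thesis unfolding T f1 f2 using os' by (simp add: algebra_simps)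
qed

lemma mult_prod_fact:
  fixes n :: "nat \<Rightarrow> nat"
  assumes "prime p" "finite A" "\<And>i. i \<in> A \<Longrightarrow> n i \<le> M"
  shows "int (multiplicity (int p) (\<Prod>i\<in>A. fact (n i) :: int)) = (\<Sum>l<M. \<Sum>i\<in>A. int (n i div p ^ Suc l))"
proof -
  have pe: "prime_elem (int p)" using assms(1) by simp
  have "multiplicity (int p) (\<Prod>i\<in>A. fact (n i) :: int) = (\<Sum>i\<in>A. multiplicity (int p) (fact (n i) :: int))"
    using assms(2) by (intro prime_elem_multiplicity_prod_distrib[OF pe]) auto
  also have "\<dots> = (\<Sum>i\<in>A. \<Sum>l<M. n i div p ^ Suc l)"
    using assms by (intro sum.cong refl legendre) auto
  finally have "int (multiplicity (int p) (\<Prod>i\<in>A. fact (n i) :: int)) = (\<Sum>i\<in>A. \<Sum>l<M. int (n i div p ^ Suc l))"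
    by simp
  also have "\<dots> = (\<Sum>l<M. \<Sum>i\<in>A. int (n i div p ^ Suc l))" by (rule sum.swap)
  finally show ?thesis .
qed

lemma mult_fact:
  assumes "prime p" "n \<le> M"
  shows "int (multiplicity (int p) (fact n :: int)) = (\<Sum>l<M. int (n div p ^ Suc l))"
  using legendre[OF assms] by simp

lemma big_pow: "prime p \<Longrightarrow> M \<le> l \<Longrightarrow> M < p ^ Suc l"
proof -
  assume "prime p" "M \<le> l"
  have "l < 2 ^ l" by simp
  also have "2 ^ l \<le> p ^ l" using prime_ge_2_nat[OF \<open>prime p\<close>] by (simp add: power_mono)
  also have "p ^ l \<le> p ^ Suc l" using prime_gt_0_nat[OF \<open>prime p\<close>] by simp
  finally show ?thesis using \<open>M \<le> l\<close> by linarith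
qed

lemma not_dvd_pow2:
  assumes "prime p" "odd p"
  shows "\<not> int p dvd 2 ^ n"
proof
  assume "int p dvd 2 ^ n"
  hence "int p dvd int 2" using prime_elem_dvd_power[of "int p"] assms(1) by simp
  hence "p dvd 2" by (simp only: of_nat_dvd_iff)
  hence "p \<le> 2" by (simp add: dvd_imp_le)
  moreover have "p \<ge> 2" using prime_ge_2_nat[OF assms(1)] .
  ultimately have "p = 2" by simp
  thus False using assms(2) by simp
qed



lemma part_U:
  fixes p k :: nat
  assumes "prime p" and "odd p" and "k > 0"
  shows "\<exists>q::rat. q \<noteq> 0 \<and> real_of_rat q = g_U (real k) \<and>
           (\<lambda>l. let P = real p ^ Suc l in
              real_of_int \<lfloor>real k ^ 2 / P\<rfloor>
              + (2 * real k - P) * real_of_int \<lfloor>(real k - 1) / P\<rfloor>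
              + (P / 2 - 2 * real k) * real_of_int \<lfloor>(2 * real k - 1) / P\<rfloor>
              - P * (real_of_int \<lfloor>(real k - 1) / P\<rfloor>)^2
              + P / 2 * (real_of_int \<lfloor>(2 * real k - 1) / P\<rfloor>)^2)
           sums real_of_int (vp p q)"
proof -
  define a :: int where "a = fact (k^2) * (\<Prod>i<k. fact i)"
  define b :: int where "b = (\<Prod>i<k. fact (k+i))"
  have a0: "a \<noteq> 0" unfolding a_def by simp
  have b0: "b \<noteq> 0" unfolding b_def by simp
  define q where "q = rat_of_int a / rat_of_int b"
  have q0: "q \<noteq> 0" unfolding q_def using a0 b0 by simp
  have gq: "real_of_rat q = g_U (real k)"
  proof -
    have "real_of_rat q = real_of_int a / real_of_int b" unfolding q_def by (simp add: of_rat_divide)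
    also have "\<dots> = fact (k^2) * ((\<Prod>i<k. fact i) / (\<Prod>i<k. fact (k+i)))"
      unfolding a_def b_def by simp
    also have "\<dots> = fact (k^2) * (\<Prod>i<k. fact i / fact (k+i))" by (simp add: prod_dividef)
    also have "\<dots> = g_U (real k)"
    proof -
      have "Gamma (1 + B_U (real k)) = fact (k^2)"
        unfolding B_U_def using Gamma_fact[of "k^2", where 'a=real] by simp
      thus ?thesis unfolding g_U_def GU_val by simp
    qed
    finally show ?thesis .
  qed
  define M where "M = k^2 + 2*k"
  define E where "E l = int (k^2 div p^Suc l) + (\<Sum>i<k. int (i div p^Suc l)) - (\<Sum>i<k. int ((k+i) div p^Suc l))" for l
  have pe: "prime_elem (int p)" using assms(1) by simp
  have kM: "k^2 \<le> M" unfolding M_def by simp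
  have vpq: "vp p q = (\<Sum>l<M. E l)"
  proof -
    have "vp p q = int (multiplicity (int p) a) - int (multiplicity (int p) b)"
      unfolding q_def by (rule vp_div[OF assms(1) a0 b0])
    also have "int (multiplicity (int p) a) = int (multiplicity (int p) (fact (k^2) :: int)) + int (multiplicity (int p) (\<Prod>i<k. fact i :: int))"
      unfolding a_def by (subst prime_elem_multiplicity_mult_distrib[OF pe]) auto
    also have "\<dots> = (\<Sum>l<M. int (k^2 div p ^ Suc l)) + (\<Sum>l<M. \<Sum>i<k. int (i div p ^ Suc l))"
      using mult_fact[OF assms(1) kM] mult_prod_fact[OF assms(1), of "{..<k}" "\<lambda>i. i" M]
      unfolding M_def by simp
    also have "int (multiplicity (int p) b) = (\<Sum>l<M. \<Sum>i<k. int ((k+i) div p ^ Suc l))"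
      unfolding b_def using mult_prod_fact[OF assms(1), of "{..<k}" "\<lambda>i. k+i" M]
      unfolding M_def by (simp add: power2_eq_square)
    finally show ?thesis unfolding E_def by (simp add: sum.distrib sum_subtractf)
  qed
  define f where "f l = (let P = real p ^ Suc l in
              real_of_int \<lfloor>real k ^ 2 / P\<rfloor>
              + (2 * real k - P) * real_of_int \<lfloor>(real k - 1) / P\<rfloor>
              + (P / 2 - 2 * real k) * real_of_int \<lfloor>(2 * real k - 1) / P\<rfloor>
              - P * (real_of_int \<lfloor>(real k - 1) / P\<rfloor>)^2
              + P / 2 * (real_of_int \<lfloor>(2 * real k - 1) / P\<rfloor>)^2)" for l
  have fE: "f l = real_of_int (E l)" for l
  proof -
    have pp: "p ^ Suc l > 0" using prime_gt_0_nat[OF assms(1)] by simp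
    have "real p ^ Suc l = real (p ^ Suc l)" by simp
    thus ?thesis unfolding f_def Let_def E_def by (simp only: termU[OF pp assms(3)])
  qed
  have Ez: "E l = 0" if "l \<notin> {..<M}" for l
  proof -
    have big: "M < p ^ Suc l" using big_pow[OF assms(1)] that by simp
    have "k^2 div p ^ Suc l = 0" using big kM by simp
    moreover have "i div p ^ Suc l = 0" if "i < k" for i using big that unfolding M_def by simp
    moreover have "(k+i) div p ^ Suc l = 0" if "i < k" for i using big that unfolding M_def by simp
    ultimately show ?thesis unfolding E_def by simp
  qed
  have "f sums (\<Sum>l\<in>{..<M}. f l)"
    by (rule sums_finite) (auto simp: fE Ez)
  also have "(\<Sum>l\<in>{..<M}. f l) = real_of_int (vp p q)" unfolding vpq fE by simp
  finally have "f sums real_of_int (vp p q)" .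
  thus ?thesis using q0 gq unfolding f_def by blast
qed

lemma part_O:
  fixes p k :: nat
  assumes "prime p" and "odd p" and "k > 0"
  shows "\<exists>q::rat. q \<noteq> 0 \<and> real_of_rat q = g_O (real k) \<and>
           (\<lambda>l. let P = real p ^ Suc l in
              real_of_int \<lfloor>(real k * (real k - 1) / 2) / P\<rfloor>
              - (real k - 1/2) * real_of_int (floor2 ((2 * real k - 3) / P))
              + P / 2 * (real_of_int (floor2 ((2 * real k - 3) / P)))^2)
           sums real_of_int (vp p q)"
proof -
  define T where "T = (\<Sum>i<k. i)"
  define X where "X = (\<Sum>i<k. i + 1)"
  define a :: int where "a = fact T * (\<Prod>i<k. fact i) * 2 ^ X"
  define b :: int where "b = 2 * (\<Prod>i<k. fact (2*i))"
  have a0: "a \<noteq> 0" unfolding a_def by simp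
  have b0: "b \<noteq> 0" unfolding b_def by simp
  define q where "q = rat_of_int a / rat_of_int b"
  have q0: "q \<noteq> 0" unfolding q_def using a0 b0 by simp
  have gq: "real_of_rat q = g_O (real k)"
  proof -
    have "real_of_rat q = real_of_int a / real_of_int b" unfolding q_def by (simp add: of_rat_divide)
    also have "\<dots> = fact T * (1/2 * ((\<Prod>i<k. fact i) / (\<Prod>i<k. fact (2*i)) * (\<Prod>i<k. 2 ^ (i+1))))"
      unfolding a_def b_def X_def by (simp add: power_sum)
    also have "\<dots> = fact T * (1/2 * (\<Prod>i<k. fact i / fact (2*i) * 2 ^ (i+1)))"
      by (simp add: prod_dividef prod.distrib)
    also have "\<dots> = g_O (real k)"
    proof -
      have "B_O (real k) = real T"
      proof -
        have "real (2 * T) = real (k * (k - 1))" using sum_id2 unfolding T_def by metis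
        thus ?thesis unfolding B_O_def using assms(3) by (simp add: of_nat_diff algebra_simps)
      qed
      hence "Gamma (1 + B_O (real k)) = fact T"
        using Gamma_fact[of T, where 'a=real] by simp
      thus ?thesis unfolding g_O_def GO_val by simp
    qed
    finally show ?thesis .
  qed
  define M where "M = T + 2*k"
  define E where "E l = int (T div p^Suc l) - (\<Sum>i<k. hh (p^Suc l) i)" for l
  have pe: "prime_elem (int p)" using assms(1) by simp
  have TM: "T \<le> M" unfolding M_def by simp
  have m2: "multiplicity (int p) (2 ^ n :: int) = 0" for n
    by (rule not_dvd_imp_multiplicity_0) (rule not_dvd_pow2[OF assms(1,2)])
  have vpq: "vp p q = (\<Sum>l<M. E l)"
  proof -
    have "vp p q = int (multiplicity (int p) a) - int (multiplicity (int p) b)"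
      unfolding q_def by (rule vp_div[OF assms(1) a0 b0])
    also have "int (multiplicity (int p) a) = int (multiplicity (int p) (fact T :: int)) + int (multiplicity (int p) (\<Prod>i<k. fact i :: int))"
      unfolding a_def using m2[of X] m2[of 0]
      by (subst prime_elem_multiplicity_mult_distrib[OF pe], simp, simp, subst prime_elem_multiplicity_mult_distrib[OF pe]) auto
    also have "\<dots> = (\<Sum>l<M. int (T div p ^ Suc l)) + (\<Sum>l<M. \<Sum>i<k. int (i div p ^ Suc l))"
      using mult_fact[OF assms(1) TM] mult_prod_fact[OF assms(1), of "{..<k}" "\<lambda>i. i" M]
      unfolding M_def by simp
    also have "int (multiplicity (int p) b) = (\<Sum>l<M. \<Sum>i<k. int (2*i div p ^ Suc l))"
    proof -
      have "int (multiplicity (int p) b) = int (multiplicity (int p) (\<Prod>i<k. fact (2*i) :: int))"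
        unfolding b_def using m2[of 1]
        by (subst prime_elem_multiplicity_mult_distrib[OF pe]) auto
      also have "\<dots> = (\<Sum>l<M. \<Sum>i<k. int (2*i div p ^ Suc l))"
        using mult_prod_fact[OF assms(1), of "{..<k}" "\<lambda>i. 2*i" M] unfolding M_def by simp
      finally show ?thesis .
    qed
    finally show ?thesis unfolding E_def hh_def by (simp add: sum.distrib sum_subtractf)
  qed
  define f where "f l = (let P = real p ^ Suc l in
              real_of_int \<lfloor>(real k * (real k - 1) / 2) / P\<rfloor>
              - (real k - 1/2) * real_of_int (floor2 ((2 * real k - 3) / P))
              + P / 2 * (real_of_int (floor2 ((2 * real k - 3) / P)))^2)" for l
  have fE: "f l = real_of_int (E l)" for l
  proof -
    have o: "odd (p ^ Suc l)" using assms(2) by simp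
    have "p \<ge> 3" using prime_ge_2_nat[OF assms(1)] assms(2) by (cases "p = 2") auto
    moreover have "p \<le> p ^ Suc l" using prime_gt_0_nat[OF assms(1)] by simp
    ultimately have p3: "p ^ Suc l \<ge> 3" by linarith
    have "real p ^ Suc l = real (p ^ Suc l)" by simp
    thus ?thesis unfolding f_def Let_def E_def T_def by (simp only: termO[OF o p3 assms(3)])
  qed
  have Ez: "E l = 0" if "l \<notin> {..<M}" for l
  proof -
    have big: "M < p ^ Suc l" using big_pow[OF assms(1)] that by simp
    have "T div p ^ Suc l = 0" using big TM by simp
    moreover have "hh (p ^ Suc l) i = 0" if "i < k" for i using big that unfolding M_def hh_def by simp
    ultimately show ?thesis unfolding E_def by simp
  qed
  have "f sums (\<Sum>l\<in>{..<M}. f l)"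
    by (rule sums_finite) (auto simp: fE Ez)
  also have "(\<Sum>l\<in>{..<M}. f l) = real_of_int (vp p q)" unfolding vpq fE by simp
  finally have "f sums real_of_int (vp p q)" .
  thus ?thesis using q0 gq unfolding f_def by blast
qed


theorem proposition5p4:
  fixes p k :: nat
  assumes "prime p" and "odd p" and "k > 0"
  shows "(\<exists>q::rat. q \<noteq> 0 \<and> real_of_rat q = g_U (real k) \<and>
           (\<lambda>l. let P = real p ^ Suc l in
              real_of_int \<lfloor>real k ^ 2 / P\<rfloor>
              + (2 * real k - P) * real_of_int \<lfloor>(real k - 1) / P\<rfloor>
              + (P / 2 - 2 * real k) * real_of_int \<lfloor>(2 * real k - 1) / P\<rfloor>
              - P * (real_of_int \<lfloor>(real k - 1) / P\<rfloor>)^2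
              + P / 2 * (real_of_int \<lfloor>(2 * real k - 1) / P\<rfloor>)^2)
           sums real_of_int (vp p q))
       \<and> (\<exists>q::rat. q \<noteq> 0 \<and> real_of_rat q = g_O (real k) \<and>
           (\<lambda>l. let P = real p ^ Suc l in
              real_of_int \<lfloor>(real k * (real k - 1) / 2) / P\<rfloor>
              - (real k - 1/2) * real_of_int (floor2 ((2 * real k - 3) / P))
              + P / 2 * (real_of_int (floor2 ((2 * real k - 3) / P)))^2)
           sums real_of_int (vp p q))"
  using part_U[OF assms] part_O[OF assms] by blast

end
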